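(* Let $K$ be a virtual knot and $r\geq2$ an integer. For every $i$ with $1\leq i\leq r$, the $i$th component $K_i$ of the $r$-multiplexed virtual link $L(K;r)$, considered as a virtual knot, is equivalent to the $r$th covering $K^{(r)}$ of $K$. In particular, $K_1,\dots,K_r$ are all the same virtual knot.
   Context: Virtual link diagrams have real (positive/negative) and virtual crossings; virtual links/knots are equivalence classes under generalized Reidemeister moves. $r$-multiplexing: for a virtual knot diagram $D$ and $r\geq2$, $L(D;r)$ is obtained by replacing $D$ with a bundle of $r$ parallel strands, positions numbered $1,\dots,r$ left to right w.r.t. the orientation. At each positive (resp. negative) crossing of $D$ the two bundles cross in an $r\times r$ grid where the position-$p$ strand of the over-bundle crosses the position-$p$ strand of the under-bundle at a positive (resp. negative) real crossing with the over-bundle strand on top, all other grid crossings being virtual. At each virtual crossing of $D$ the bundles cross in an $r\times r$ grid of virtual crossings, and each bundle additionally has its strands cyclically shifted via $r-1$ virtual crossings: position $p$ goes to $p-1\pmod r$ if the other string of $D$ crosses the bundle from left to right, and to $p+1\pmod r$ if from right to left. The result has $r$ components; with a base point on $D$, the $i$th is the one through position $i$ there. $L(K;r)$ denotes the virtual link represented by $L(D;r)$ for any diagram $D$ of $K$ (well defined). Index: for a real crossing $c$ of $D$, its specified path runs along $D$ from the overcrossing to the undercrossing at $c$; each real crossing on it contributes $+1$ if the other string crosses the path from left to right and $-1$ otherwise; $\mathrm{ind}(c)$ is the sum. The $r$th covering: $D^{(r)}$ is obtained from $D$ by replacing every real crossing whose index is not divisible by $r$ with a virtual crossing; its virtual knot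 type is an invariant of $K$, denoted $K^{(r)}$. *)

theory Defs
  imports Main "HOL-Library.Countable" "HOL-Library.Multiset"
begin

text \<open>A Gauss diagram of a (long-cut) virtual knot: the cyclic word read along the
  knot from a base point.  A letter (c, ov, s) records a passage through the real
  crossing c, which is the over-passage iff ov, and the sign s of c.\<close>

type_synonym 'a gletter = "'a \<times> bool \<times> int"

definition gd_wf :: "'a gletter list \<Rightarrow> bool" where
  "gd_wf w \<longleftrightarrow> (\<forall>c \<in> fst ` set w. \<exists>s. (s = 1 \<or> s = -1)
      \<and> length (filter (\<lambda>x. fst x = c) w) = 2
      \<and> (c, True, s) \<in> set w \<and> (c, False, s) \<in> set w)"

definition pm :: "bool \<Rightarrow> int" where
  "pm b = (if b then 1 else -1)"

text \<open>Admissible Reidemeister-III triangle: T is the top strand (over at a and b),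
  M the middle strand (under at a, over at c), B the bottom strand (under at b and c).
  The boolean flags record the order of the two passages on each strand; the sign
  condition is exactly the one realised by three straight oriented lines forming a
  triangle in the plane.\<close>

definition r3_triangle ::
  "'a gletter list \<Rightarrow> 'a gletter list \<Rightarrow> 'a gletter list \<Rightarrow> bool" where
  "r3_triangle T M B \<longleftrightarrow> (\<exists>a b c sa sb sc ta mu be.
      distinct [a, b, c] \<and>
      T = (if ta then [(a, True, sa), (b, True, sb)] else [(b, True, sb), (a, True, sa)]) \<and>
      M = (if mu then [(a, False, sa), (c, True, sc)] else [(c, True, sc), (a, False, sa)]) \<and>
      B = (if be then [(b, False, sb), (c, False, sc)] else [(c, False, sc), (b, False, sb)]) \<and>
      sa * pm ta * pm mu = sb * pm ta * pm be \<and>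
      sb * pm ta * pm be = sc * pm mu * pm be)"

inductive gd_step :: "nat gletter list \<Rightarrow> nat gletter list \<Rightarrow> bool" where
  rot: "gd_wf (u @ v) \<Longrightarrow> gd_step (u @ v) (v @ u)"
| rename: "gd_wf w \<Longrightarrow> inj f \<Longrightarrow> gd_step w (map (\<lambda>(c, ov, s). (f c, ov, s)) w)"
| r1: "gd_wf (u @ v) \<Longrightarrow> gd_wf (u @ [(c, ov, s), (c, \<not> ov, s)] @ v) \<Longrightarrow>
       gd_step (u @ v) (u @ [(c, ov, s), (c, \<not> ov, s)] @ v)"
| r2: "gd_wf (u @ v @ z) \<Longrightarrow> gd_wf (u @ [(a, ov, s), (b, ov, - s)] @ v @ P @ z) \<Longrightarrow>
       P = [(a, \<not> ov, s), (b, \<not> ov, - s)] \<or> P = [(b, \<not> ov, - s), (a, \<not> ov, s)] \<Longrightarrow>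
       gd_step (u @ v @ z) (u @ [(a, ov, s), (b, ov, - s)] @ v @ P @ z)"
| r3: "gd_wf (u0 @ P1 @ u1 @ P2 @ u2 @ P3 @ u3) \<Longrightarrow>
       mset [P1, P2, P3] = mset [T, M, B] \<Longrightarrow> r3_triangle T M B \<Longrightarrow>
       gd_step (u0 @ P1 @ u1 @ P2 @ u2 @ P3 @ u3)
               (u0 @ rev P1 @ u1 @ rev P2 @ u2 @ rev P3 @ u3)"

definition gd_relabel :: "'a::countable gletter list \<Rightarrow> nat gletter list" where
  "gd_relabel w = map (\<lambda>(c, ov, s). (to_nat c, ov, s)) w"

definition gd_equiv :: "'a::countable gletter list \<Rightarrow> 'b::countable gletter list \<Rightarrow> bool" where
  "gd_equiv w1 w2 \<longleftrightarrow> (\<lambda>x y. gd_step x y \<or> gd_step y x)\<^sup>*\<^sup>* (gd_relabel w1) (gd_relabel w2)"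

datatype ptype = Over | Under | Virt

text \<open>A passage (c, k, lr): the diagram passes through crossing c; k says whether it is
  the over- or under-passage of a real crossing, or a passage of a virtual crossing;
  lr says that the other string crosses this passage from left to right.
  The list enumerates the passages in order along the oriented knot from the base point.\<close>

type_synonym vpassage = "nat \<times> ptype \<times> bool"

definition kind :: "vpassage list \<Rightarrow> nat \<Rightarrow> ptype" where
  "kind w t = fst (snd (w ! t))"

definition lr :: "vpassage list \<Rightarrow> nat \<Rightarrow> bool" where
  "lr w t = snd (snd (w ! t))"

definition partner :: "vpassage list \<Rightarrow> nat \<Rightarrow> nat" where
  "partner w p = (THE q. q < length w \<and> q \<noteq> p \<and> fst (w ! q) = fst (w ! p))"

definition vd_local_wf :: "vpassage list \<Rightarrow> bool" where
  "vd_local_wf w \<longleftrightarrow>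
     (\<forall>p < length w. \<exists>!q. q < length w \<and> q \<noteq> p \<and> fst (w ! q) = fst (w ! p)) \<and>
     (\<forall>p < length w. lr w (partner w p) \<noteq> lr w p \<and>
        (kind w p = Virt \<longleftrightarrow> kind w (partner w p) = Virt) \<and>
        (kind w p = Over \<longleftrightarrow> kind w (partner w p) = Under))"

text \<open>Rotation system of the underlying 4-valent graph.  Edge e runs from passage e to
  passage e+1 (mod N).  Dart (e, True) is its tail (outgoing at passage e), dart
  (e, False) its head (incoming at passage e+1).\<close>

definition dart_out :: "nat \<Rightarrow> nat \<times> bool" where
  "dart_out p = (p, True)"

definition dart_in :: "vpassage list \<Rightarrow> nat \<Rightarrow> nat \<times> bool" where
  "dart_in w p = ((p + length w - 1) mod length w, False)"

definition dart_alpha :: "nat \<times> bool \<Rightarrow> nat \<times> bool" where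
  "dart_alpha d = (fst d, \<not> snd d)"

text \<open>Counterclockwise successor of a dart around its vertex: if at passage p the other
  strand (passage q) crosses from left to right, the ccw cyclic order is
  out_p, in_q, in_p, out_q.\<close>
definition dart_sigma :: "vpassage list \<Rightarrow> nat \<times> bool \<Rightarrow> nat \<times> bool" where
  "dart_sigma w d =
     (let p = (if snd d then fst d else (fst d + 1) mod length w); q = partner w p in
      if snd d then (if lr w p then dart_in w q else dart_out q)
      else (if lr w p then dart_out q else dart_in w q))"

definition face_perm :: "vpassage list \<Rightarrow> nat \<times> bool \<Rightarrow> nat \<times> bool" where
  "face_perm w d = dart_sigma w (dart_alpha d)"

definition darts :: "vpassage list \<Rightarrow> (nat \<times> bool) set" where
  "darts w = {..<length w} \<times> UNIV"

definition num_faces :: "vpassage list \<Rightarrow> nat" where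
  "num_faces w = card (darts w // {(x, y). x \<in> darts w \<and> y \<in> darts w \<and>
                                     (\<exists>k. (face_perm w ^^ k) x = y)})"

text \<open>A virtual knot diagram: locally well-formed and the underlying immersed curve is
  planar (the rotation system has genus 0: V - E + F = 2 with V = N/2, E = N).\<close>
definition vd_wf :: "vpassage list \<Rightarrow> bool" where
  "vd_wf w \<longleftrightarrow> vd_local_wf w \<and> (w \<noteq> [] \<longrightarrow> num_faces w = length w div 2 + 2)"

text \<open>Sign of the real crossing through passage t (positive = right-handed).\<close>
definition psign :: "vpassage list \<Rightarrow> nat \<Rightarrow> int" where
  "psign w t = (if (kind w t = Over) = lr w t then -1 else 1)"

definition vd_gauss :: "vpassage list \<Rightarrow> nat gletter list" where
  "vd_gauss w = concat (map (\<lambda>t. if kind w t = Virt then []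
                 else [(fst (w ! t), kind w t = Over, psign w t)]) [0..<length w])"

definition on_path :: "nat \<Rightarrow> nat \<Rightarrow> nat \<Rightarrow> nat \<Rightarrow> bool" where
  "on_path N a b t = (if a < b then a < t \<and> t < b else (a < t \<and> t < N) \<or> t < b)"

definition vd_index :: "vpassage list \<Rightarrow> nat \<Rightarrow> int" where
  "vd_index w t =
     (let a = (if kind w t = Over then t else partner w t);
          b = (if kind w t = Over then partner w t else t) in
      \<Sum>u \<in> {u. u < length w \<and> on_path (length w) a b u \<and> kind w u \<noteq> Virt}. pm (lr w u))"

text \<open>D^(r): real crossings of index not divisible by r become virtual.\<close>
definition covering :: "vpassage list \<Rightarrow> nat \<Rightarrow> nat gletter list" where
  "covering w r = concat (map (\<lambda>t.
      if kind w t \<noteq> Virt \<and> int r dvd vd_index w t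
      then [(fst (w ! t), kind w t = Over, psign w t)] else []) [0..<length w])"

text \<open>Shift of the bundle positions at a passage: at a virtual crossing the position p
  goes to p - 1 (mod r) if the other string crosses from left to right, p + 1 otherwise.\<close>
definition vshift :: "vpassage list \<Rightarrow> nat \<Rightarrow> int" where
  "vshift w t = (if kind w t = Virt then (if lr w t then -1 else 1) else 0)"

definition pre_shift :: "vpassage list \<Rightarrow> nat \<Rightarrow> int" where
  "pre_shift w t = (\<Sum>u < t. vshift w u)"

definition lap_shift :: "vpassage list \<Rightarrow> int" where
  "lap_shift w = pre_shift w (length w)"

definition nlaps :: "vpassage list \<Rightarrow> nat \<Rightarrow> nat" where
  "nlaps w r = (LEAST m::nat. m > 0 \<and> (int m * lap_shift w) mod int r = 0)"

text \<open>Gauss word (real crossings only) of the component of L(D;r) through position i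
  (positions taken mod r) at the base point.  The real crossing of L(D;r) in the grid
  of crossing c where the position-p strands meet is labelled (c, p mod r).\<close>
definition mplex_component :: "vpassage list \<Rightarrow> nat \<Rightarrow> nat \<Rightarrow> (nat \<times> int) gletter list" where
  "mplex_component w r i = concat (map (\<lambda>l. concat (map (\<lambda>t.
       if kind w t = Virt then []
       else [((fst (w ! t), (int i + int l * lap_shift w + pre_shift w t) mod int r),
              kind w t = Over, psign w t)]) [0..<length w])) [0..<nlaps w r])"

text \<open>The i-th component considered as a virtual knot: crossings with other components
  are forgotten (become virtual), i.e. only self-crossings are kept.\<close>
definition mplex_knot :: "vpassage list \<Rightarrow> nat \<Rightarrow> nat \<Rightarrow> (nat \<times> int) gletter list" where
  "mplex_knot w r i = (let C = mplex_component w r i in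
      filter (\<lambda>x. length (filter (\<lambda>y. fst y = fst x) C) = 2) C)"

end

theory Submission
  imports Defs Complex_Main "HOL-Library.Function_Algebras"
begin

lemma partner_ex1:
  assumes "vd_local_wf w" "p < length w"
  shows "\<exists>!q. q < length w \<and> q \<noteq> p \<and> fst (w ! q) = fst (w ! p)"
  using assms unfolding vd_local_wf_def by blast

lemma partner_prop:
  assumes "vd_local_wf w" "p < length w"
  shows "partner w p < length w \<and> partner w p \<noteq> p \<and> fst (w ! partner w p) = fst (w ! p)"
  unfolding partner_def using theI'[OF partner_ex1[OF assms]] .

lemma partner_lt: "vd_local_wf w \<Longrightarrow> p < length w \<Longrightarrow> partner w p < length w"
  using partner_prop by blast
lemma partner_ne: "vd_local_wf w \<Longrightarrow> p < length w \<Longrightarrow> partner w p \<noteq> p"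
  using partner_prop by blast
lemma partner_fst: "vd_local_wf w \<Longrightarrow> p < length w \<Longrightarrow> fst (w ! partner w p) = fst (w ! p)"
  using partner_prop by blast

lemma partner_unique:
  assumes "vd_local_wf w" "p < length w" "q < length w" "q \<noteq> p" "fst (w ! q) = fst (w ! p)"
  shows "q = partner w p"
  using partner_ex1[OF assms(1,2)] partner_prop[OF assms(1,2)] assms(3-5) by blast

lemma partner_partner:
  assumes "vd_local_wf w" "p < length w"
  shows "partner w (partner w p) = p"
proof -
  have "p = partner w (partner w p)"
    by (rule partner_unique) (use partner_prop[OF assms] assms in auto)
  then show ?thesis by simp
qed

lemma lr_partner: "vd_local_wf w \<Longrightarrow> p < length w \<Longrightarrow> lr w (partner w p) = (\<not> lr w p)"
  unfolding vd_local_wf_def by auto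

lemma kind_partner_virt: "vd_local_wf w \<Longrightarrow> p < length w \<Longrightarrow> (kind w (partner w p) = Virt) = (kind w p = Virt)"
  unfolding vd_local_wf_def by auto

lemma kind_partner_over: "vd_local_wf w \<Longrightarrow> p < length w \<Longrightarrow> (kind w (partner w p) = Under) = (kind w p = Over)"
  unfolding vd_local_wf_def by auto

lemma kind_partner_under: "vd_local_wf w \<Longrightarrow> p < length w \<Longrightarrow> (kind w (partner w p) = Over) = (kind w p = Under)"
proof -
  assume a: "vd_local_wf w" "p < length w"
  have "(kind w (partner w (partner w p)) = Under) = (kind w (partner w p) = Over)"
    by (rule kind_partner_over[OF a(1) partner_lt[OF a]])
  then show ?thesis using partner_partner[OF a] by simp
qed

lemma bij_partner: "vd_local_wf w \<Longrightarrow> bij_betw (partner w) {..<length w} {..<length w}"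
  by (rule bij_betw_byWitness[where f'="partner w"]) (auto simp: partner_partner partner_lt)

lemma sum_antisym_inv:
  fixes f :: "nat \<Rightarrow> 'a::linordered_idom"
  assumes "bij_betw g A A" "\<And>x. x \<in> A \<Longrightarrow> f (g x) = - f x"
  shows "sum f A = 0"
proof -
  have "sum f A = sum (f \<circ> g) A" using sum.reindex_bij_betw[OF assms(1), of f] by simp
  also have "\<dots> = - sum f A" using assms(2) by (simp add: sum_negf)
  finally show ?thesis by simp
qed

lemma sum_pm_lr: "vd_local_wf w \<Longrightarrow> (\<Sum>u<length w. pm (lr w u)) = 0"
  by (rule sum_antisym_inv[OF bij_partner]) (auto simp: lr_partner pm_def)

lemma sum_vshift: "vd_local_wf w \<Longrightarrow> (\<Sum>u<length w. vshift w u) = 0"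
  by (rule sum_antisym_inv[OF bij_partner]) (auto simp: lr_partner kind_partner_virt vshift_def)


section \<open>Darts\<close>

definition pm1 :: "nat \<Rightarrow> nat \<Rightarrow> nat" where "pm1 N p = (p + N - 1) mod N"

lemma dart_in_eq: "dart_in w p = (pm1 (length w) p, False)"
  by (simp add: dart_in_def pm1_def)

lemma pm1_suc: "p < N \<Longrightarrow> Suc (pm1 N p) mod N = p"
  unfolding pm1_def
  by (cases p) (auto simp: mod_Suc Suc_diff_Suc)

lemma suc_pm1: "e < N \<Longrightarrow> pm1 N (Suc e mod N) = e"
  unfolding pm1_def
  by (cases "Suc e = N") (auto simp: mod_Suc)

lemma pm1_lt: "0 < N \<Longrightarrow> pm1 N p < N"
  unfolding pm1_def by simp

lemma pm1_less: "0 < p \<Longrightarrow> p < N \<Longrightarrow> pm1 N p = p - 1"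
proof -
  assume a: "0 < p" "p < N"
  then have e: "p + N - 1 = (p - 1) + N" by simp
  have "(p + N - 1) mod N = (p - 1) mod N" by (simp only: e mod_add_self2)
  then show ?thesis unfolding pm1_def using a by simp
qed

lemma pm1_zero: "0 < N \<Longrightarrow> pm1 N 0 = N - 1"
  unfolding pm1_def by simp

lemma sigma_out:
  "p < length w \<Longrightarrow> dart_sigma w (p, True) =
     (if lr w p then dart_in w (partner w p) else dart_out (partner w p))"
  by (simp add: dart_sigma_def Let_def)

lemma sigma_in:
  "p < length w \<Longrightarrow> dart_sigma w (dart_in w p) =
     (if lr w p then dart_out (partner w p) else dart_in w (partner w p))"
  by (simp add: dart_sigma_def Let_def dart_in_eq pm1_suc)

lemma dart_False_eq: "e < length w \<Longrightarrow> (e, False) = dart_in w (Suc e mod length w)"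
  by (simp add: dart_in_eq suc_pm1)

lemma sigma4:
  assumes wf: "vd_local_wf w" and d: "d \<in> darts w"
  shows "dart_sigma w (dart_sigma w (dart_sigma w (dart_sigma w d))) = d"
proof -
  obtain e b where eb: "d = (e, b)" "e < length w" using d by (auto simp: darts_def)
  have out: "dart_sigma w (dart_sigma w (dart_sigma w (dart_sigma w (p, True)))) = (p, True)"
    if "p < length w" for p
    using that by (cases "lr w p") (auto simp: sigma_out sigma_in dart_out_def partner_partner[OF wf]
        lr_partner[OF wf] partner_lt[OF wf])
  have inn: "dart_sigma w (dart_sigma w (dart_sigma w (dart_sigma w (dart_in w p)))) = dart_in w p"
    if "p < length w" for p
    using that by (cases "lr w p") (auto simp: sigma_out sigma_in dart_out_def partner_partner[OF wf]
        lr_partner[OF wf] partner_lt[OF wf])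
  show ?thesis
  proof (cases b)
    case True then show ?thesis using out eb by simp
  next
    case False
    have "d = dart_in w (Suc e mod length w)" using eb False dart_False_eq by simp
    moreover have "Suc e mod length w < length w" using eb by (intro mod_less_divisor) linarith
    ultimately show ?thesis using inn by simp
  qed
qed

lemma sigma_darts:
  assumes wf: "vd_local_wf w" and d: "d \<in> darts w"
  shows "dart_sigma w d \<in> darts w"
proof -
  have N: "0 < length w" using d by (auto simp: darts_def)
  obtain e b where eb: "d = (e, b)" "e < length w" using d by (auto simp: darts_def)
  show ?thesis
  proof (cases b)
    case True
    then show ?thesis using partner_lt[OF wf eb(2)] N
      by (auto simp: sigma_out eb darts_def dart_in_def dart_out_def)
  next
    case False
    have p: "Suc e mod length w < length w" using N by simp
    show ?thesis using False partner_lt[OF wf p] N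
      by (auto simp: dart_sigma_def Let_def eb darts_def dart_in_def dart_out_def)
  qed
qed

lemma alpha_darts: "d \<in> darts w \<Longrightarrow> dart_alpha d \<in> darts w"
  by (auto simp: darts_def dart_alpha_def)

lemma fp_darts: "vd_local_wf w \<Longrightarrow> d \<in> darts w \<Longrightarrow> face_perm w d \<in> darts w"
  unfolding face_perm_def by (intro sigma_darts alpha_darts)

lemma sigma_inj: assumes wf: "vd_local_wf w" shows "inj_on (dart_sigma w) (darts w)"
proof
  fix x y assume "x \<in> darts w" "y \<in> darts w" "dart_sigma w x = dart_sigma w y"
  then show "x = y" using sigma4[OF wf, of x] sigma4[OF wf, of y] by metis
qed

lemma fp_inj: assumes wf: "vd_local_wf w" shows "inj_on (face_perm w) (darts w)"
proof
  fix x y assume xy: "x \<in> darts w" "y \<in> darts w" "face_perm w x = face_perm w y"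
  then have "dart_alpha x = dart_alpha y"
    using inj_onD[OF sigma_inj[OF wf]] alpha_darts unfolding face_perm_def by blast
  then show "x = y" by (auto simp: dart_alpha_def prod_eq_iff)
qed

lemma finite_darts: "finite (darts w)"
  unfolding darts_def by simp

lemma funpow_in: "f ` A \<subseteq> A \<Longrightarrow> x \<in> A \<Longrightarrow> (f ^^ k) x \<in> A"
  by (induction k) auto

lemma funpow_inj_cancel:
  assumes "inj_on f A" "f ` A \<subseteq> A" "x \<in> A" "y \<in> A" "(f ^^ k) x = (f ^^ k) y"
  shows "x = y"
  using assms(5)
proof (induction k)
  case 0 then show ?case by simp
next
  case (Suc k)
  then have "f ((f ^^ k) x) = f ((f ^^ k) y)" by simp
  then have "(f ^^ k) x = (f ^^ k) y"
    using inj_onD[OF assms(1)] funpow_in[OF assms(2)] assms(3,4) by blast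
  then show ?case using Suc by blast
qed

lemma period_exists:
  assumes "inj_on f A" "f ` A \<subseteq> A" "finite A" "x \<in> A"
  shows "\<exists>n>0. (f ^^ n) x = x"
proof -
  let ?g = "\<lambda>k. (f ^^ k) x"
  have "\<not> inj_on ?g {0..card A}"
  proof
    assume "inj_on ?g {0..card A}"
    moreover have "?g ` {0..card A} \<subseteq> A" using funpow_in[OF assms(2,4)] by auto
    ultimately have "card {0..card A} \<le> card A" using card_inj_on_le assms(3) by blast
    then show False by simp
  qed
  then obtain i j where ij: "i \<in> {0..card A}" "j \<in> {0..card A}" "i \<noteq> j" "?g i = ?g j"
    unfolding inj_on_def by blast
  then obtain a b where ab: "a < b" "(f ^^ a) x = (f ^^ b) x"
    by (metis linorder_neqE_nat)
  have "(f ^^ a) ((f ^^ (b - a)) x) = (f ^^ a) x"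
    using ab funpow_add[of a "b - a" f] by simp
  then have "(f ^^ (b - a)) x = x"
    using funpow_inj_cancel[OF assms(1,2) funpow_in[OF assms(2,4)] assms(4)] by blast
  then show ?thesis using ab by (intro exI[of _ "b - a"]) auto
qed


definition fR :: "vpassage list \<Rightarrow> ((nat \<times> bool) \<times> (nat \<times> bool)) set" where
  "fR w = {(x, y). x \<in> darts w \<and> y \<in> darts w \<and> (\<exists>k. (face_perm w ^^ k) x = y)}"

lemma num_faces_fR: "num_faces w = card (darts w // fR w)"
  unfolding num_faces_def fR_def ..

lemma fp_image: "vd_local_wf w \<Longrightarrow> face_perm w ` darts w \<subseteq> darts w"
  using fp_darts by blast

lemma equiv_fR: assumes wf: "vd_local_wf w" shows "equiv (darts w) (fR w)"
proof (rule equivI)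
  show "fR w \<subseteq> darts w \<times> darts w" unfolding fR_def by auto
  show "refl_on (darts w) (fR w)"
  proof (rule refl_onI)
    show "(x, x) \<in> fR w" if "x \<in> darts w" for x
      unfolding fR_def using that by (auto intro!: exI[of _ 0])
  qed
  show "sym (fR w)"
  proof (rule symI)
    fix x y assume "(x, y) \<in> fR w"
    then obtain k where k: "x \<in> darts w" "y \<in> darts w" "(face_perm w ^^ k) x = y"
      unfolding fR_def by blast
    obtain n where n: "n > 0" "(face_perm w ^^ n) x = x"
      using period_exists[OF fp_inj[OF wf] fp_image[OF wf] finite_darts k(1)] by blast
    have nk: "(face_perm w ^^ (n * k)) x = x"
      by (induction k) (simp_all add: funpow_add n(2) del: funpow.simps)
    have "(face_perm w ^^ (n * k - k)) y = (face_perm w ^^ (n * k - k + k)) x"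
      using k(3) funpow_add[of "n * k - k" k "face_perm w"] by simp
    also have "n * k - k + k = n * k" using n(1) by (cases n) auto
    finally have "(face_perm w ^^ (n * k - k)) y = x" using nk by simp
    then show "(y, x) \<in> fR w" using k unfolding fR_def by blast
  qed
  show "trans (fR w)"
  proof (rule transI)
    fix x y z assume "(x, y) \<in> fR w" "(y, z) \<in> fR w"
    then obtain k1 k2 where "x \<in> darts w" "z \<in> darts w" "(face_perm w ^^ k1) x = y"
        "(face_perm w ^^ k2) y = z"
      unfolding fR_def by blast
    then show "(x, z) \<in> fR w" unfolding fR_def
      using funpow_add[of k2 k1 "face_perm w"] by (auto intro!: exI[of _ "k2 + k1"])
  qed
qed

lemma same_class:
  assumes "equiv A R" "C \<in> A // R" "(a, b) \<in> R"
  shows "a \<in> C \<longleftrightarrow> b \<in> C"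
proof -
  obtain x where C: "C = R `` {x}" using assms(2) by (rule quotientE) simp
  have st: "sym R" "trans R" using assms(1) by (auto elim: equivE)
  show ?thesis
  proof
    assume "a \<in> C" then have "(x, a) \<in> R" using C by simp
    then have "(x, b) \<in> R" using assms(3) by (rule transD[OF st(2)])
    then show "b \<in> C" using C by simp
  next
    assume "b \<in> C" then have "(x, b) \<in> R" using C by simp
    moreover have "(b, a) \<in> R" using assms(3) by (rule symD[OF st(1)])
    ultimately have "(x, a) \<in> R" by (rule transD[OF st(2)])
    then show "a \<in> C" using C by simp
  qed
qed

lemma sigma_class:
  assumes wf: "vd_local_wf w" and C: "C \<in> darts w // fR w" and d: "d \<in> darts w"
  shows "dart_alpha d \<in> C \<longleftrightarrow> dart_sigma w d \<in> C"
proof -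
  have "(dart_alpha d, face_perm w (dart_alpha d)) \<in> fR w"
    unfolding fR_def using alpha_darts[OF d] fp_darts[OF wf alpha_darts[OF d]]
    by (auto intro!: exI[of _ 1])
  moreover have "face_perm w (dart_alpha d) = dart_sigma w d"
    by (simp add: face_perm_def dart_alpha_def)
  ultimately show ?thesis using same_class[OF equiv_fR[OF wf] C] by simp
qed

lemma fp_class:
  assumes wf: "vd_local_wf w" and C: "C \<in> darts w // fR w" and d: "d \<in> darts w"
  shows "face_perm w d \<in> C \<longleftrightarrow> d \<in> C"
proof -
  have "(d, face_perm w d) \<in> fR w"
    unfolding fR_def using d fp_darts[OF wf d] by (auto intro!: exI[of _ 1])
  then show ?thesis using same_class[OF equiv_fR[OF wf] C] by simp
qed

definition sc :: "real \<Rightarrow> (nat \<Rightarrow> real) \<Rightarrow> (nat \<Rightarrow> real)" where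
  "sc a f = (\<lambda>x. a * f x)"

interpretation fv: vector_space sc
  by unfold_locales (auto simp: sc_def fun_eq_iff algebra_simps)

lemma sum_fun_apply: "(sum g A) e = (\<Sum>a\<in>A. g a e)" for g :: "'b \<Rightarrow> nat \<Rightarrow> real"
  by (induction A rule: infinite_finite_induct) auto

definition bd :: "vpassage list \<Rightarrow> (nat \<times> bool) set \<Rightarrow> nat \<Rightarrow> real" where
  "bd w C = (\<lambda>e. if e < length w then (if (e, True) \<in> C then 1 else 0) - (if (e, False) \<in> C then 1 else 0) else 0)"

definition isCyc :: "vpassage list \<Rightarrow> (nat \<Rightarrow> real) \<Rightarrow> bool" where
  "isCyc w x \<longleftrightarrow> (\<forall>e. length w \<le> e \<longrightarrow> x e = 0) \<and>
     (\<forall>p < length w. x (pm1 (length w) p) + x (pm1 (length w) (partner w p)) = x p + x (partner w p))"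

lemma bd_cyc:
  assumes wf: "vd_local_wf w" and C: "C \<in> darts w // fR w"
  shows "isCyc w (bd w C)"
  unfolding isCyc_def
proof (intro conjI allI impI)
  fix e assume "length w \<le> e" then show "bd w C e = 0" by (simp add: bd_def)
next
  fix p assume p: "p < length w"
  let ?N = "length w"
  define q where "q = partner w p"
  have q: "q < ?N" using partner_lt[OF wf p] q_def by simp
  have N: "0 < ?N" using p by (rule le_less_trans[OF le0])
  have dp: "dart_in w p \<in> darts w" "dart_in w q \<in> darts w" "(p, True) \<in> darts w" "(q, True) \<in> darts w"
    using p q N by (auto simp: darts_def dart_in_eq pm1_lt)
  have h1: "((pm1 ?N p, True) \<in> C) = (dart_sigma w (dart_in w p) \<in> C)"
    using sigma_class[OF wf C dp(1)] by (simp add: dart_alpha_def dart_in_eq)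
  have h2: "((pm1 ?N q, True) \<in> C) = (dart_sigma w (dart_in w q) \<in> C)"
    using sigma_class[OF wf C dp(2)] by (simp add: dart_alpha_def dart_in_eq)
  have h3: "((p, False) \<in> C) = (dart_sigma w (p, True) \<in> C)"
    using sigma_class[OF wf C dp(3)] by (simp add: dart_alpha_def)
  have h4: "((q, False) \<in> C) = (dart_sigma w (q, True) \<in> C)"
    using sigma_class[OF wf C dp(4)] by (simp add: dart_alpha_def)
  have pq: "partner w q = p" "lr w q = (\<not> lr w p)"
    using partner_partner[OF wf p] lr_partner[OF wf p] q_def by auto
  have "bd w C (pm1 ?N p) + bd w C (pm1 ?N q) = bd w C p + bd w C q"
    using p q N pm1_lt[OF N]
    unfolding bd_def
    apply (simp only: if_True h1 h2 h3 h4 sigma_in[OF p] sigma_in[OF q] sigma_out[OF p] sigma_out[OF q] pq q_def[symmetric])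
    apply (cases "lr w p")
     apply (simp_all add: dart_in_eq dart_out_def)
    done
  then show "bd w C (pm1 ?N p) + bd w C (pm1 ?N (partner w p)) = bd w C p + bd w C (partner w p)"
    using q_def by simp
qed


section \<open>Cycle space is spanned by few vectors\<close>

definition Kv :: "vpassage list \<Rightarrow> nat \<Rightarrow> real" where
  "Kv w = (\<lambda>e. if e < length w then 1 else 0)"

definition Cyc :: "vpassage list \<Rightarrow> nat \<Rightarrow> nat \<Rightarrow> real" where
  "Cyc w p = (\<lambda>e. if p \<le> e \<and> e < partner w p then 1 else 0)"

definition Pset :: "vpassage list \<Rightarrow> nat set" where
  "Pset w = {p. p < length w \<and> p < partner w p}"

lemma finite_Pset: "finite (Pset w)"
  unfolding Pset_def by simp

lemma cyc_decomp_pt: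
  assumes wf: "vd_local_wf w" and cy: "isCyc w x" and e: "e < length w"
  shows "x e = x (length w - 1) + (\<Sum>p\<in>Pset w. (x p - x (pm1 (length w) p)) * Cyc w p e)"
  using e
proof (induction e)
  case 0
  let ?N = "length w"
  have N: "0 < ?N" using 0 by simp
  have z: "0 \<in> Pset w" using partner_ne[OF wf N] N unfolding Pset_def by auto
  have "(\<Sum>p\<in>Pset w. (x p - x (pm1 ?N p)) * Cyc w p 0) =
        (\<Sum>p\<in>Pset w. if p = 0 then x p - x (pm1 ?N p) else 0)"
    by (rule sum.cong) (auto simp: Cyc_def Pset_def)
  also have "\<dots> = x 0 - x (pm1 ?N 0)" using z finite_Pset by (simp add: sum.delta)
  finally show ?case using pm1_zero[OF N] by simp
next
  case (Suc e)
  let ?N = "length w"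
  let ?d = "\<lambda>p. x p - x (pm1 ?N p)"
  have e: "e < ?N" "Suc e < ?N" using Suc by auto
  have IH: "x e = x (?N - 1) + (\<Sum>p\<in>Pset w. ?d p * Cyc w p e)" using Suc e by simp
  have diff: "Cyc w p (Suc e) - Cyc w p e = (if p = Suc e then 1 else 0) - (if partner w p = Suc e then 1 else 0)"
    if "p \<in> Pset w" for p
    using that unfolding Cyc_def Pset_def by (cases "p = Suc e") auto
  have "(\<Sum>p\<in>Pset w. ?d p * Cyc w p (Suc e)) - (\<Sum>p\<in>Pset w. ?d p * Cyc w p e)
      = (\<Sum>p\<in>Pset w. ?d p * (Cyc w p (Suc e) - Cyc w p e))"
    by (simp add: sum_subtractf[symmetric] algebra_simps)
  also have "\<dots> = (\<Sum>p\<in>Pset w. (if p = Suc e then ?d p else 0)) - (\<Sum>p\<in>Pset w. (if p = partner w (Suc e) then ?d p else 0))"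
  proof -
    have "?d p * (Cyc w p (Suc e) - Cyc w p e) = (if p = Suc e then ?d p else 0) - (if p = partner w (Suc e) then ?d p else 0)"
      if p: "p \<in> Pset w" for p
    proof -
      have pl: "p < ?N" using p unfolding Pset_def by auto
      have "(partner w p = Suc e) = (p = partner w (Suc e))"
        using partner_partner[OF wf pl] partner_partner[OF wf e(2)] by metis
      then show ?thesis using diff[OF p] by auto
    qed
    then show ?thesis by (simp add: sum_subtractf[symmetric])
  qed
  also have "\<dots> = ?d (Suc e) - ?d (partner w (Suc e)) * (if partner w (Suc e) \<in> Pset w then 1 else 0) - (if Suc e \<in> Pset w then 0 else ?d (Suc e))"
    using finite_Pset by (simp add: sum.delta)
  also have "\<dots> = ?d (Suc e)"
  proof -
    let ?q = "partner w (Suc e)"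
    have q: "?q < ?N" "?q \<noteq> Suc e" "partner w ?q = Suc e"
      using partner_lt[OF wf e(2)] partner_ne[OF wf e(2)] partner_partner[OF wf e(2)] by auto
    have ceq: "x (pm1 ?N (Suc e)) + x (pm1 ?N ?q) = x (Suc e) + x ?q"
      using cy e(2) unfolding isCyc_def by blast
    show ?thesis
    proof (cases "Suc e \<in> Pset w")
      case True
      then have "?q \<notin> Pset w" using q unfolding Pset_def by auto
      then show ?thesis using True by simp
    next
      case False
      then have "?q \<in> Pset w" using q e unfolding Pset_def by auto
      then show ?thesis using False ceq by simp
    qed
  qed
  finally have "(\<Sum>p\<in>Pset w. ?d p * Cyc w p (Suc e)) = (\<Sum>p\<in>Pset w. ?d p * Cyc w p e) + ?d (Suc e)"
    by simp
  moreover have "pm1 ?N (Suc e) = e" using pm1_less[of "Suc e" ?N] e by simp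
  ultimately show ?case using IH by simp
qed

lemma cyc_in_span:
  assumes wf: "vd_local_wf w" and cy: "isCyc w x"
  shows "x \<in> fv.span (insert (Kv w) (Cyc w ` Pset w))"
proof -
  let ?N = "length w"
  let ?d = "\<lambda>p. x p - x (pm1 ?N p)"
  have eq: "x = sc (x (?N - 1)) (Kv w) + (\<Sum>p\<in>Pset w. sc (?d p) (Cyc w p))"
  proof (rule ext)
    fix e
    show "x e = (sc (x (?N - 1)) (Kv w) + (\<Sum>p\<in>Pset w. sc (?d p) (Cyc w p))) e"
    proof (cases "e < ?N")
      case True
      then show ?thesis using cyc_decomp_pt[OF wf cy True]
        by (simp add: sum_fun_apply sc_def Kv_def)
    next
      case False
      have "Cyc w p e = 0" if "p \<in> Pset w" for p
        using that False partner_lt[OF wf, of p] unfolding Cyc_def Pset_def by auto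
      then show ?thesis using False cy unfolding isCyc_def
        by (simp add: sum_fun_apply sc_def Kv_def)
    qed
  qed
  have "sc (x (?N - 1)) (Kv w) + (\<Sum>p\<in>Pset w. sc (?d p) (Cyc w p)) \<in> fv.span (insert (Kv w) (Cyc w ` Pset w))"
    by (intro fv.span_add fv.span_scale fv.span_sum fv.span_base) auto
  then show ?thesis using eq by simp
qed


section \<open>The functional Phi\<close>

definition Phi :: "vpassage list \<Rightarrow> (nat \<Rightarrow> real) \<Rightarrow> real" where
  "Phi w x = (\<Sum>v<length w. if lr w v then x (pm1 (length w) v) else - x v)"

lemma bij_pm1: "0 < N \<Longrightarrow> bij_betw (pm1 N) {..<N} {..<N}"
  by (rule bij_betw_byWitness[where f'="\<lambda>e. Suc e mod N"]) (auto simp: pm1_suc suc_pm1 pm1_lt)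

lemma Phi_bd:
  assumes wf: "vd_local_wf w" and C: "C \<in> darts w // fR w"
  shows "Phi w (bd w C) = 0"
proof (cases "length w = 0")
  case True then show ?thesis by (simp add: Phi_def)
next
  case False
  let ?N = "length w"
  have N: "0 < ?N" using False by simp
  define M where "M d = (if d \<in> C then 1 else (0::real))" for d
  define g where "g u = M (u, True) - M (pm1 ?N u, True)" for u
  have tm: "(if lr w v then bd w C (pm1 ?N v) else - bd w C v) = g (partner w v)"
    if v: "v < ?N" for v
  proof -
    let ?u = "partner w v"
    have u: "?u < ?N" "partner w ?u = v" "lr w ?u = (\<not> lr w v)"
      using partner_lt[OF wf v] partner_partner[OF wf v] lr_partner[OF wf v] by auto
    have fpe: "face_perm w (pm1 ?N p, True) = dart_sigma w (dart_in w p)" for p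
      by (simp add: face_perm_def dart_alpha_def dart_in_eq)
    have fpo: "face_perm w (p, False) = dart_sigma w (p, True)" for p
      by (simp add: face_perm_def dart_alpha_def)
    have dv: "(pm1 ?N v, True) \<in> darts w" "(pm1 ?N ?u, True) \<in> darts w" "(v, False) \<in> darts w"
      using v u N pm1_lt[OF N] by (auto simp: darts_def)
    have c1: "M (pm1 ?N v, True) = M (dart_sigma w (dart_in w v))"
      using fp_class[OF wf C dv(1)] fpe unfolding M_def by simp
    have c2: "M (pm1 ?N ?u, True) = M (dart_sigma w (dart_in w ?u))"
      using fp_class[OF wf C dv(2)] fpe unfolding M_def by simp
    have c3: "M (v, False) = M (dart_sigma w (v, True))"
      using fp_class[OF wf C dv(3)] fpo unfolding M_def by simp
    have bdv: "bd w C v = M (v, True) - M (v, False)" "bd w C (pm1 ?N v) = M (pm1 ?N v, True) - M (pm1 ?N v, False)"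
      using v pm1_lt[OF N] unfolding bd_def M_def by auto
    show ?thesis
    proof (cases "lr w v")
      case True
      then show ?thesis unfolding bdv g_def
        using c1 c2 sigma_in[OF v] sigma_in[OF u(1)] u by (simp add: dart_out_def dart_in_eq)
    next
      case False
      then show ?thesis unfolding bdv g_def
        using c3 c2 sigma_out[OF v] sigma_in[OF u(1)] u by (simp add: dart_out_def dart_in_eq)
    qed
  qed
  have "Phi w (bd w C) = (\<Sum>v<?N. g (partner w v))"
    unfolding Phi_def by (rule sum.cong) (auto simp: tm)
  also have "\<dots> = (\<Sum>u<?N. g u)"
    using sum.reindex_bij_betw[OF bij_partner[OF wf], of g] by simp
  also have "\<dots> = (\<Sum>u<?N. M (u, True)) - (\<Sum>u<?N. M (pm1 ?N u, True))"
    unfolding g_def by (simp add: sum_subtractf)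
  also have "(\<Sum>u<?N. M (pm1 ?N u, True)) = (\<Sum>u<?N. M (u, True))"
    using sum.reindex_bij_betw[OF bij_pm1[OF N], of "\<lambda>u. M (u, True)"] by simp
  finally show ?thesis by simp
qed

lemma Phi_Cyc:
  assumes wf: "vd_local_wf w" and p: "p < length w" and pq: "p < partner w p"
  shows "Phi w (Cyc w p) = (\<Sum>v\<in>{p<..<partner w p}. real_of_int (pm (lr w v)))"
proof -
  let ?N = "length w"
  let ?q = "partner w p"
  have N: "0 < ?N" using p by (rule le_less_trans[OF le0])
  have q: "?q < ?N" "lr w ?q = (\<not> lr w p)" using partner_lt[OF wf p] lr_partner[OF wf p] by auto
  have t: "(if lr w v then Cyc w p (pm1 ?N v) else - Cyc w p v) =
     (if p < v \<and> v < ?q then real_of_int (pm (lr w v)) else 0)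
     + (if v = p then (if lr w p then 0 else -1) else 0)
     + (if v = ?q then (if lr w ?q then 1 else 0) else 0)" if v: "v < ?N" for v
  proof (cases "v = 0")
    case True
    then show ?thesis using pm1_zero[OF N] q pq p unfolding Cyc_def pm_def by (cases "p = 0") auto
  next
    case False
    then have "pm1 ?N v = v - 1" using pm1_less v by simp
    then show ?thesis using False q pq p unfolding Cyc_def pm_def by auto
  qed
  have "Phi w (Cyc w p) = (\<Sum>v<?N. (if p < v \<and> v < ?q then real_of_int (pm (lr w v)) else 0)
     + (if v = p then (if lr w p then 0 else -1) else 0)
     + (if v = ?q then (if lr w ?q then 1 else 0) else 0))"
    unfolding Phi_def by (rule sum.cong) (auto simp: t)
  also have "\<dots> = (\<Sum>v<?N. (if p < v \<and> v < ?q then real_of_int (pm (lr w v)) else 0))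
      + (if lr w p then 0 else -1) + (if lr w ?q then 1 else 0)"
    using p q by (simp add: sum.distrib)
  also have "(\<Sum>v<?N. (if p < v \<and> v < ?q then real_of_int (pm (lr w v)) else 0))
      = (\<Sum>v\<in>{p<..<?q}. real_of_int (pm (lr w v)))"
  proof -
    have "{p<..<?q} \<subseteq> {..<?N}" using q by auto
    then show ?thesis
      by (simp add: sum.If_cases Int_absorb1 flip: greaterThanLessThan_iff)
  qed
  finally show ?thesis using q by simp
qed


section \<open>Dual connectivity\<close>

lemma sigma_sigma_in:
  assumes wf: "vd_local_wf w" and p: "p < length w"
  shows "dart_sigma w (dart_sigma w (dart_in w p)) = (p, True)"
  using p partner_lt[OF wf p] partner_partner[OF wf p] lr_partner[OF wf p]
  by (cases "lr w p") (auto simp: sigma_in sigma_out dart_out_def)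

lemma finite_Q: "finite (darts w // fR w)"
  by (rule finite_quotient[OF finite_darts]) (auto simp: fR_def)

lemma dual_const:
  assumes wf: "vd_local_wf w" and N: "0 < length w"
    and hc: "\<And>e. e < length w \<Longrightarrow> (\<Sum>C\<in>darts w // fR w. c C * bd w C e) = 0"
    and C1: "C1 \<in> darts w // fR w"
  shows "c C1 = c (fR w `` {(0, True)})"
proof -
  let ?Q = "darts w // fR w"
  let ?N = "length w"
  define cls where "cls d = fR w `` {d}" for d
  define h where "h d = c (cls d)" for d
  have eqv: "equiv (darts w) (fR w)" by (rule equiv_fR[OF wf])
  have mem: "d \<in> C \<longleftrightarrow> C = cls d" if CQ: "C \<in> ?Q" and dd: "d \<in> darts w" for C d
  proof -
    obtain x where x: "x \<in> darts w" "C = fR w `` {x}" using CQ by (blast elim: quotientE)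
    show ?thesis using x dd equiv_class_eq_iff[OF eqv, of x d] unfolding cls_def by auto
  qed
  have sumd: "(\<Sum>C\<in>?Q. c C * (if d \<in> C then 1 else 0)) = h d" if d: "d \<in> darts w" for d
  proof -
    have "(\<Sum>C\<in>?Q. c C * (if d \<in> C then 1 else 0)) = (\<Sum>C\<in>?Q. if C = cls d then c C else 0)"
      by (rule sum.cong) (auto simp: mem d)
    also have "\<dots> = h d" using finite_Q quotientI[OF d] unfolding h_def cls_def
      by (simp add: sum.delta')
    finally show ?thesis .
  qed
  have hTF: "h (e, True) = h (e, False)" if e: "e < ?N" for e
  proof -
    have d: "(e, True) \<in> darts w" "(e, False) \<in> darts w" using e by (auto simp: darts_def)
    have "(\<Sum>C\<in>?Q. c C * bd w C e) = (\<Sum>C\<in>?Q. c C * (if (e, True) \<in> C then 1 else 0))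
            - (\<Sum>C\<in>?Q. c C * (if (e, False) \<in> C then 1 else 0))"
      using e by (simp add: bd_def sum_subtractf[symmetric] algebra_simps)
    then show ?thesis using hc[OF e] sumd[OF d(1)] sumd[OF d(2)] by simp
  qed
  have hfp: "h (face_perm w d) = h d" if d: "d \<in> darts w" for d
  proof -
    have "(d, face_perm w d) \<in> fR w"
      unfolding fR_def using d fp_darts[OF wf d] by (auto intro!: exI[of _ 1])
    then have "cls (face_perm w d) = cls d"
      using equiv_class_eq[OF eqv] unfolding cls_def by auto
    then show ?thesis unfolding h_def by simp
  qed
  have halpha: "h (dart_alpha d) = h d" if d: "d \<in> darts w" for d
    using d hTF by (cases d; cases "snd d") (auto simp: dart_alpha_def darts_def)
  have hsig: "h (dart_sigma w d) = h d" if d: "d \<in> darts w" for d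
  proof -
    have "dart_sigma w d = face_perm w (dart_alpha d)"
      by (simp add: face_perm_def dart_alpha_def)
    then show ?thesis using hfp[OF alpha_darts[OF d]] halpha[OF d] by simp
  qed
  have step: "h (Suc e mod ?N, True) = h (e, True)" if e: "e < ?N" for e
  proof -
    have p: "Suc e mod ?N < ?N" using N by simp
    have din: "dart_in w (Suc e mod ?N) = (e, False)" using dart_False_eq[OF e] by simp
    have d0: "(e, False) \<in> darts w" using e by (auto simp: darts_def)
    have d1: "dart_sigma w (e, False) \<in> darts w" by (rule sigma_darts[OF wf d0])
    have "(Suc e mod ?N, True) = dart_sigma w (dart_sigma w (e, False))"
      using sigma_sigma_in[OF wf p] din by simp
    then have "h (Suc e mod ?N, True) = h (e, False)"
      using hsig[OF d1] hsig[OF d0] by simp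
    then show ?thesis using hTF[OF e] by simp
  qed
  have all: "h (e, True) = h (0, True)" if "e < ?N" for e
    using that
  proof (induction e)
    case 0 then show ?case by simp
  next
    case (Suc e)
    then have "Suc e mod ?N = Suc e" by simp
    then show ?case using step[of e] Suc by simp
  qed
  obtain d where d: "d \<in> darts w" "C1 = cls d" using C1 unfolding cls_def by (blast elim: quotientE)
  obtain e b where eb: "d = (e, b)" "e < ?N" using d(1) by (auto simp: darts_def)
  have "h d = h (e, True)" using eb hTF[OF eb(2)] by (cases b) auto
  then have "c C1 = h (0, True)" using d all[OF eb(2)] unfolding h_def by simp
  then show ?thesis unfolding h_def cls_def by simp
qed

lemma card_Pset:
  assumes wf: "vd_local_wf w"
  shows "length w = 2 * card (Pset w)"
proof -
  let ?N = "length w"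
  have un: "{..<?N} = Pset w \<union> partner w ` Pset w"
  proof
    show "{..<?N} \<subseteq> Pset w \<union> partner w ` Pset w"
    proof
      fix u assume u: "u \<in> {..<?N}"
      then have u': "u < ?N" by simp
      show "u \<in> Pset w \<union> partner w ` Pset w"
      proof (cases "u < partner w u")
        case True then show ?thesis using u' unfolding Pset_def by auto
      next
        case False
        then have "partner w u < u" using partner_ne[OF wf u'] by simp
        then have "partner w u \<in> Pset w" using partner_lt[OF wf u'] partner_partner[OF wf u']
          unfolding Pset_def by auto
        then show ?thesis using partner_partner[OF wf u'] by (metis UnI2 image_eqI)
      qed
    qed
    show "Pset w \<union> partner w ` Pset w \<subseteq> {..<?N}"
      using partner_lt[OF wf] unfolding Pset_def by auto
  qed
  have dis: "Pset w \<inter> partner w ` Pset w = {}"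
    using partner_lt[OF wf] partner_partner[OF wf] unfolding Pset_def by fastforce
  have inj: "inj_on (partner w) (Pset w)"
    by (rule inj_on_inverseI[where g="partner w"]) (auto simp: Pset_def partner_partner[OF wf])
  have "?N = card (Pset w \<union> partner w ` Pset w)" using un by (metis card_lessThan)
  also have "\<dots> = card (Pset w) + card (partner w ` Pset w)"
    using dis finite_Pset by (simp add: card_Un_disjoint)
  also have "\<dots> = 2 * card (Pset w)" using card_image[OF inj] by simp
  finally show ?thesis .
qed

lemma Phi_lin:
  "Phi w (\<Sum>b\<in>B. sc (u b) b) = (\<Sum>b\<in>B. u b * Phi w b)"
proof -
  have "Phi w (\<Sum>b\<in>B. sc (u b) b) =
    (\<Sum>v<length w. \<Sum>b\<in>B. u b * (if lr w v then b (pm1 (length w) v) else - b v))"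
    unfolding Phi_def
    by (rule sum.cong) (auto simp: sum_fun_apply sc_def sum_negf)
  also have "\<dots> = (\<Sum>b\<in>B. \<Sum>v<length w. u b * (if lr w v then b (pm1 (length w) v) else - b v))"
    by (rule sum.swap)
  also have "\<dots> = (\<Sum>b\<in>B. u b * Phi w b)"
    unfolding Phi_def by (simp add: sum_distrib_left)
  finally show ?thesis .
qed


lemma key_lemma_real:
  assumes wfd: "vd_wf w" and p: "p < length w" and pq: "p < partner w p"
  shows "Phi w (Cyc w p) = 0"
proof -
  have wf: "vd_local_wf w" using wfd unfolding vd_wf_def by simp
  let ?N = "length w"
  let ?Q = "darts w // fR w"
  have N: "0 < ?N" using p by (rule le_less_trans[OF le0])
  have cardQ: "card ?Q = card (Pset w) + 2"
    using wfd N card_Pset[OF wf] unfolding vd_wf_def num_faces_fR by auto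
  define C0 where "C0 = fR w `` {(0, True)}"
  have C0: "C0 \<in> ?Q" unfolding C0_def using N by (intro quotientI) (auto simp: darts_def)
  define B where "B = bd w ` (?Q - {C0})"
  have finB: "finite B" unfolding B_def using finite_Q by simp
  have sum_bd: "(\<Sum>C\<in>?Q. (if C = C0 then 0 else f C) * bd w C e) = (\<Sum>C\<in>?Q - {C0}. f C * bd w C e)"
    for f :: "(nat \<times> bool) set \<Rightarrow> real" and e
  proof -
    have "(\<Sum>C\<in>?Q - {C0}. (if C = C0 then 0 else f C) * bd w C e) = (\<Sum>C\<in>?Q - {C0}. f C * bd w C e)"
      by (rule sum.cong) auto
    then show ?thesis
      using sum.remove[OF finite_Q C0, of "\<lambda>C. (if C = C0 then 0 else f C) * bd w C e"] by simp
  qed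
  have inj: "inj_on (bd w) (?Q - {C0})"
  proof
    fix C1 C2 assume C1: "C1 \<in> ?Q - {C0}" and C2: "C2 \<in> ?Q - {C0}" and eq: "bd w C1 = bd w C2"
    show "C1 = C2"
    proof (rule ccontr)
      assume ne: "C1 \<noteq> C2"
      define c where "c C = (if C = C1 then 1 else if C = C2 then -1 else (0::real))" for C
      have "(\<Sum>C\<in>?Q. c C * bd w C e) = 0" if "e < ?N" for e
      proof -
        have "(\<Sum>C\<in>?Q. c C * bd w C e) = (\<Sum>C\<in>?Q. (if C = C1 then bd w C e else 0) - (if C = C2 then bd w C e else 0))"
          by (rule sum.cong) (auto simp: c_def ne)
        also have "\<dots> = bd w C1 e - bd w C2 e"
          using C1 C2 finite_Q by (simp add: sum_subtractf sum.delta')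
        finally show ?thesis using eq by simp
      qed
      then have "c C1 = c C0" using dual_const[OF wf N, of c C1] C1 unfolding C0_def by auto
      moreover have "C0 \<noteq> C1" "C0 \<noteq> C2" using C1 C2 by auto
      ultimately show False unfolding c_def by simp
    qed
  qed
  have indep: "fv.independent B"
  proof (rule fv.independent_if_scalars_zero[OF finB])
    fix f x assume h: "(\<Sum>y\<in>B. sc (f y) y) = 0" and x: "x \<in> B"
    define c where "c C = (if C = C0 then 0 else f (bd w C))" for C
    have "(\<Sum>C\<in>?Q. c C * bd w C e) = 0" if "e < ?N" for e
    proof -
      have "(\<Sum>C\<in>?Q. c C * bd w C e) = (\<Sum>C\<in>?Q - {C0}. f (bd w C) * bd w C e)"
        unfolding c_def by (rule sum_bd)
      also have "\<dots> = (\<Sum>y\<in>B. sc (f y) y) e"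
        unfolding B_def by (simp add: sum.reindex[OF inj] sum_fun_apply sc_def)
      finally show ?thesis using h by simp
    qed
    then have allc: "\<And>C. C \<in> ?Q \<Longrightarrow> c C = c C0" using dual_const[OF wf N, of c] unfolding C0_def by auto
    obtain C where C: "C \<in> ?Q" "C \<noteq> C0" "x = bd w C" using x unfolding B_def by auto
    have "c C = c C0" using allc C(1) by blast
    then show "f x = 0" using C(2,3) unfolding c_def by simp
  qed
  define G where "G = insert (Kv w) (Cyc w ` Pset w)"
  have finG: "finite G" unfolding G_def using finite_Pset by simp
  have cardG: "card G \<le> Suc (card (Pset w))"
  proof -
    have "card G \<le> Suc (card (Cyc w ` Pset w))" unfolding G_def using finite_Pset by (simp add: card_insert_le_m1 card_insert_if)
    also have "\<dots> \<le> Suc (card (Pset w))" using card_image_le[OF finite_Pset] by simp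
    finally show ?thesis .
  qed
  have pP: "p \<in> Pset w" using p pq unfolding Pset_def by simp
  have BG: "B \<subseteq> fv.span G"
    unfolding B_def G_def using cyc_in_span[OF wf bd_cyc[OF wf]] by auto
  have inspan: "Cyc w p \<in> fv.span B"
  proof (rule ccontr)
    assume nin: "Cyc w p \<notin> fv.span B"
    have ind2: "fv.independent (insert (Cyc w p) B)" by (rule fv.independent_insertI[OF nin indep])
    have sub: "insert (Cyc w p) B \<subseteq> fv.span G"
      using BG pP unfolding G_def by (auto intro: fv.span_base)
    have "card (insert (Cyc w p) B) \<le> card G"
      using fv.independent_span_bound[OF finG ind2 sub] by simp
    moreover have "Cyc w p \<notin> B" using nin fv.span_base by blast
    moreover have "card B = card ?Q - 1"
      unfolding B_def using card_image[OF inj] finite_Q C0 by (simp add: card_Diff_singleton)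
    ultimately show False using finB cardG cardQ by simp
  qed
  obtain u where u: "Cyc w p = (\<Sum>v\<in>B. sc (u v) v)"
    using inspan fv.span_finite[OF finB] by auto
  have "Phi w (Cyc w p) = (\<Sum>v\<in>B. u v * Phi w v)" using u Phi_lin by simp
  also have "\<dots> = 0"
    by (rule sum.neutral) (auto simp: B_def Phi_bd[OF wf])
  finally show ?thesis .
qed

lemma key_lemma:
  assumes wfd: "vd_wf w" and p: "p < length w" and pq: "p < partner w p"
  shows "(\<Sum>v\<in>{p<..<partner w p}. pm (lr w v)) = 0"
proof -
  have wf: "vd_local_wf w" using wfd unfolding vd_wf_def by simp
  have "real_of_int (\<Sum>v\<in>{p<..<partner w p}. pm (lr w v)) = 0"
    using key_lemma_real[OF assms] Phi_Cyc[OF wf p pq] by simp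
  then show ?thesis by linarith
qed


section \<open>Index versus shifts\<close>

lemma split3:
  fixes f :: "nat \<Rightarrow> int"
  assumes "m < n"
  shows "(\<Sum>u<n. f u) = (\<Sum>u<m. f u) + f m + (\<Sum>u\<in>{m<..<n}. f u)"
proof -
  have e: "{..<n} = {..<m} \<union> ({m} \<union> {m<..<n})" using assms by auto
  have "sum f ({..<m} \<union> ({m} \<union> {m<..<n})) = sum f {..<m} + sum f ({m} \<union> {m<..<n})"
    by (rule sum.union_disjoint) auto
  also have "sum f ({m} \<union> {m<..<n}) = f m + sum f {m<..<n}"
    by (subst sum.union_disjoint) auto
  finally show ?thesis unfolding e by (simp add: add.assoc)
qed

definition rp :: "vpassage list \<Rightarrow> nat \<Rightarrow> int" where
  "rp w u = (if kind w u = Virt then 0 else pm (lr w u))"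

lemma pm_rp: "pm (lr w u) = rp w u - vshift w u"
  unfolding rp_def vshift_def pm_def by auto

lemma sum_rp_total: "vd_local_wf w \<Longrightarrow> (\<Sum>u<length w. rp w u) = 0"
  using sum_pm_lr[of w] sum_vshift[of w] by (simp add: pm_rp sum_subtractf)

lemma key_rp:
  assumes "vd_wf w" "p < length w" "p < partner w p"
  shows "(\<Sum>u\<in>{p<..<partner w p}. rp w u) = (\<Sum>u\<in>{p<..<partner w p}. vshift w u)"
  using key_lemma[OF assms] by (simp add: pm_rp sum_subtractf)

lemma index_shift:
  assumes wfd: "vd_wf w" and t: "t < length w" and ov: "kind w t = Over"
  shows "vd_index w t = pre_shift w (partner w t) - pre_shift w t"
proof -
  have wf: "vd_local_wf w" using wfd unfolding vd_wf_def by simp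
  let ?N = "length w"
  let ?a = t
  let ?b = "partner w t"
  have b: "?b < ?N" "?b \<noteq> ?a" "partner w ?b = ?a" "kind w ?b = ptype.Under"
    using partner_lt[OF wf t] partner_ne[OF wf t] partner_partner[OF wf t] kind_partner_over[OF wf t] ov
    by auto
  have va: "vshift w ?a = 0" "vshift w ?b = 0" using ov b(4) by (auto simp: vshift_def)
  have rab: "rp w ?a + rp w ?b = 0"
    using ov b(4) lr_partner[OF wf t] by (auto simp: rp_def pm_def)
  have idx: "vd_index w t = (\<Sum>u\<in>{u. u < ?N \<and> on_path ?N ?a ?b u}. rp w u)"
  proof -
    have "vd_index w t = (\<Sum>u\<in>{u. u < ?N \<and> on_path ?N ?a ?b u \<and> kind w u \<noteq> Virt}. pm (lr w u))"
      unfolding vd_index_def using ov by simp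
    also have "\<dots> = (\<Sum>u\<in>{u. u < ?N \<and> on_path ?N ?a ?b u}. rp w u)"
      by (rule sum.mono_neutral_cong_left) (auto simp: rp_def)
    finally show ?thesis .
  qed
  show ?thesis
  proof (cases "?a < ?b")
    case True
    have set: "{u. u < ?N \<and> on_path ?N ?a ?b u} = {?a<..<?b}"
      using True b(1) by (auto simp: on_path_def)
    have "pre_shift w ?b = pre_shift w ?a + vshift w ?a + (\<Sum>u\<in>{?a<..<?b}. vshift w u)"
      unfolding pre_shift_def by (rule split3[OF True])
    then show ?thesis using idx set key_rp[OF wfd t True] va by simp
  next
    case False
    then have ba: "?b < ?a" using b(2) by simp
    have set: "{u. u < ?N \<and> on_path ?N ?a ?b u} = {..<?b} \<union> {?a<..<?N}"
      using ba b(1) t by (auto simp: on_path_def)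
    have idx2: "vd_index w t = (\<Sum>u<?b. rp w u) + (\<Sum>u\<in>{?a<..<?N}. rp w u)"
    proof -
      have "sum (rp w) ({..<?b} \<union> {?a<..<?N}) = sum (rp w) {..<?b} + sum (rp w) {?a<..<?N}"
        by (rule sum.union_disjoint) (use ba in auto)
      then show ?thesis using idx set by simp
    qed
    have k: "(\<Sum>u\<in>{?b<..<?a}. rp w u) = (\<Sum>u\<in>{?b<..<?a}. vshift w u)"
      using key_rp[OF wfd b(1)] b(3) ba by simp
    have tot: "(\<Sum>u<?N. rp w u) = (\<Sum>u<?a. rp w u) + rp w ?a + (\<Sum>u\<in>{?a<..<?N}. rp w u)"
      by (rule split3[OF t])
    have tot2: "(\<Sum>u<?a. rp w u) = (\<Sum>u<?b. rp w u) + rp w ?b + (\<Sum>u\<in>{?b<..<?a}. rp w u)"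
      by (rule split3[OF ba])
    have pre: "pre_shift w ?a = pre_shift w ?b + vshift w ?b + (\<Sum>u\<in>{?b<..<?a}. vshift w u)"
      unfolding pre_shift_def by (rule split3[OF ba])
    show ?thesis using idx2 k tot tot2 pre sum_rp_total[OF wf] rab va by simp
  qed
qed


lemma concat_if: "concat (map (\<lambda>t. if P t then [g t] else []) xs) = map g (filter P xs)"
  by (induction xs) auto

lemma concat_if': "concat (map (\<lambda>t. if P t then [] else [g t]) xs) = map g (filter (\<lambda>t. \<not> P t) xs)"
  by (induction xs) auto

lemma len_filter_upt: "length (filter P [0..<N]) = card {s. s < N \<and> P s}"
  unfolding length_filter_conv_card by (intro arg_cong[where f=card]) auto

lemma lap0: "vd_local_wf w \<Longrightarrow> lap_shift w = 0"
  unfolding lap_shift_def pre_shift_def using sum_vshift by simp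

lemma nlaps1: "lap_shift w = 0 \<Longrightarrow> nlaps w r = 1"
  unfolding nlaps_def by (rule Least_equality) auto

lemma psign_partner:
  assumes wf: "vd_local_wf w" and t: "t < length w" and real: "kind w t \<noteq> Virt"
  shows "psign w (partner w t) = psign w t"
  using lr_partner[OF wf t] kind_partner_over[OF wf t] kind_partner_under[OF wf t] real
  by (cases "kind w t") (auto simp: psign_def)

lemma index_partner:
  assumes wf: "vd_local_wf w" and t: "t < length w" and real: "kind w t \<noteq> Virt"
  shows "vd_index w (partner w t) = vd_index w t"
  using kind_partner_over[OF wf t] kind_partner_under[OF wf t] real partner_partner[OF wf t]
  by (cases "kind w t") (auto simp: vd_index_def Let_def)

lemma shift_dvd_index:
  assumes wfd: "vd_wf w" and t: "t < length w" and real: "kind w t \<noteq> Virt"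
  shows "(int r dvd (pre_shift w (partner w t) - pre_shift w t)) = (int r dvd vd_index w t)"
proof -
  have wf: "vd_local_wf w" using wfd unfolding vd_wf_def by simp
  show ?thesis
  proof (cases "kind w t")
    case Over
    then show ?thesis using index_shift[OF wfd t] by simp
  next
    case Under
    have pt: "partner w t < length w" "kind w (partner w t) = Over"
      using partner_lt[OF wf t] kind_partner_under[OF wf t] Under by auto
    have "vd_index w t = pre_shift w t - pre_shift w (partner w t)"
      using index_shift[OF wfd pt] index_partner[OF wf t real] partner_partner[OF wf t] by simp
    then have "pre_shift w (partner w t) - pre_shift w t = - vd_index w t" by simp
    then show ?thesis by (simp only: dvd_minus_iff)
  next
    case Virt then show ?thesis using real by simp
  qed
qed

definition labl :: "vpassage list \<Rightarrow> nat \<Rightarrow> nat \<Rightarrow> nat \<Rightarrow> nat \<times> int" where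
  "labl w r i t = (fst (w ! t), (int i + pre_shift w t) mod int r)"

lemma mplex_component_eq:
  assumes wf: "vd_local_wf w"
  shows "mplex_component w r i = map (\<lambda>t. (labl w r i t, kind w t = Over, psign w t))
            (filter (\<lambda>t. kind w t \<noteq> Virt) [0..<length w])"
  unfolding mplex_component_def nlaps1[OF lap0[OF wf]] labl_def
  by (simp add: concat_if')

lemma covering_eq:
  "covering w r = map (\<lambda>t. (fst (w ! t), kind w t = Over, psign w t))
            (filter (\<lambda>t. kind w t \<noteq> Virt \<and> int r dvd vd_index w t) [0..<length w])"
  unfolding covering_def by (simp add: concat_if)

lemma count_labels:
  assumes wf: "vd_local_wf w" and t: "t < length w" and real: "kind w t \<noteq> Virt"
  shows "length (filter (\<lambda>y. fst y = labl w r i t) (mplex_component w r i)) =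
         (if labl w r i (partner w t) = labl w r i t then 2 else 1)"
proof -
  let ?N = "length w"
  have "length (filter (\<lambda>y. fst y = labl w r i t) (mplex_component w r i)) =
        length (filter (\<lambda>s. kind w s \<noteq> Virt \<and> labl w r i s = labl w r i t) [0..<?N])"
    unfolding mplex_component_eq[OF wf] by (simp add: filter_map o_def)
  also have "\<dots> = card {s. s < ?N \<and> kind w s \<noteq> Virt \<and> labl w r i s = labl w r i t}"
    by (rule len_filter_upt)
  also have "{s. s < ?N \<and> kind w s \<noteq> Virt \<and> labl w r i s = labl w r i t} =
     (if labl w r i (partner w t) = labl w r i t then {t, partner w t} else {t})"
  proof -
    have "s = t \<or> s = partner w t" if "s < ?N" "labl w r i s = labl w r i t" for s
      using partner_unique[OF wf t that(1)] that(2) unfolding labl_def by auto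
    then show ?thesis
      using t real partner_lt[OF wf t] kind_partner_virt[OF wf t] by auto
  qed
  finally show ?thesis using partner_ne[OF wf t] by auto
qed

lemma mplex_knot_eq:
  assumes wfd: "vd_wf w"
  shows "mplex_knot w r i = map (\<lambda>t. (labl w r i t, kind w t = Over, psign w t))
            (filter (\<lambda>t. kind w t \<noteq> Virt \<and> int r dvd vd_index w t) [0..<length w])"
proof -
  have wf: "vd_local_wf w" using wfd unfolding vd_wf_def by simp
  have "mplex_knot w r i = map (\<lambda>t. (labl w r i t, kind w t = Over, psign w t))
      (filter (\<lambda>t. kind w t \<noteq> Virt \<and> length (filter (\<lambda>y. fst y = labl w r i t) (mplex_component w r i)) = 2) [0..<length w])"
    unfolding mplex_knot_def Let_def
    by (subst (1) mplex_component_eq[OF wf]) (simp add: filter_map o_def)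
  also have "\<dots> = map (\<lambda>t. (labl w r i t, kind w t = Over, psign w t))
            (filter (\<lambda>t. kind w t \<noteq> Virt \<and> int r dvd vd_index w t) [0..<length w])"
  proof -
    have "(kind w t \<noteq> Virt \<and> length (filter (\<lambda>y. fst y = labl w r i t) (mplex_component w r i)) = 2)
        = (kind w t \<noteq> Virt \<and> int r dvd vd_index w t)" if t: "t < length w" for t
    proof (cases "kind w t = Virt")
      case True then show ?thesis by simp
    next
      case False
      have "(labl w r i (partner w t) = labl w r i t) = (int r dvd vd_index w t)"
        using shift_dvd_index[OF wfd t False, of r] partner_fst[OF wf t]
        unfolding labl_def by (simp add: mod_eq_dvd_iff)
      then show ?thesis using count_labels[OF wf t False] False by simp
    qed
    then show ?thesis by (intro arg_cong[where f="map _"] filter_cong) auto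
  qed
  finally show ?thesis .
qed


definition Gf :: "vpassage list \<Rightarrow> nat \<Rightarrow> nat \<Rightarrow> nat \<Rightarrow> int" where
  "Gf w r i c = (int i + pre_shift w (SOME s. s < length w \<and> kind w s \<noteq> Virt \<and> fst (w ! s) = c)) mod int r"

lemma mplex_knot_map:
  assumes wfd: "vd_wf w"
  shows "mplex_knot w r i = map (\<lambda>(c, ov, s). ((c, Gf w r i c), ov, s)) (covering w r)"
proof -
  have wf: "vd_local_wf w" using wfd unfolding vd_wf_def by simp
  have "labl w r i t = (fst (w ! t), Gf w r i (fst (w ! t)))"
    if t: "t < length w" "kind w t \<noteq> Virt" "int r dvd vd_index w t" for t
  proof -
    let ?P = "\<lambda>s. s < length w \<and> kind w s \<noteq> Virt \<and> fst (w ! s) = fst (w ! t)"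
    have ex: "?P (SOME s. ?P s)" by (rule someI[of ?P t]) (use t in auto)
    then have "(SOME s. ?P s) = t \<or> (SOME s. ?P s) = partner w t"
      using partner_unique[OF wf t(1)] by blast
    moreover have "labl w r i (partner w t) = labl w r i t"
      using shift_dvd_index[OF wfd t(1,2), of r] partner_fst[OF wf t(1)] t(3)
      unfolding labl_def by (simp add: mod_eq_dvd_iff)
    ultimately show ?thesis unfolding Gf_def labl_def by auto
  qed
  then show ?thesis
    unfolding mplex_knot_eq[OF wfd] covering_eq by (auto simp: labl_def)
qed

lemma gd_wf_map:
  assumes "inj f" "gd_wf w"
  shows "gd_wf (map (\<lambda>(c, ov, s). (f c, ov, s)) w)"
  unfolding gd_wf_def
proof
  fix c' assume "c' \<in> fst ` set (map (\<lambda>(c, ov, s). (f c, ov, s)) w)"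
  then obtain c where c: "c \<in> fst ` set w" "c' = f c" by force
  obtain s where s: "s = 1 \<or> s = -1" "length (filter (\<lambda>x. fst x = c) w) = 2"
      "(c, True, s) \<in> set w" "(c, False, s) \<in> set w"
    using assms(2) c(1) unfolding gd_wf_def by blast
  have "length (filter (\<lambda>x. fst x = c') (map (\<lambda>(c, ov, s). (f c, ov, s)) w)) =
        length (filter (\<lambda>x. fst x = c) w)"
    unfolding c(2) filter_map length_map
    by (rule arg_cong[where f=length], rule filter_cong) (auto simp: injD[OF assms(1)])
  then show "\<exists>s. (s = 1 \<or> s = -1) \<and> length (filter (\<lambda>x. fst x = c') (map (\<lambda>(c, ov, s). (f c, ov, s)) w)) = 2
        \<and> (c', True, s) \<in> set (map (\<lambda>(c, ov, s). (f c, ov, s)) w)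
        \<and> (c', False, s) \<in> set (map (\<lambda>(c, ov, s). (f c, ov, s)) w)"
    using s c(2) by (intro exI[of _ s]) force
qed

lemma gd_wf_covering:
  assumes wfd: "vd_wf w"
  shows "gd_wf (covering w r)"
  unfolding gd_wf_def
proof
  have wf: "vd_local_wf w" using wfd unfolding vd_wf_def by simp
  let ?keep = "\<lambda>t. kind w t \<noteq> Virt \<and> int r dvd vd_index w t"
  let ?g = "\<lambda>t. (fst (w ! t), kind w t = Over, psign w t)"
  fix c assume "c \<in> fst ` set (covering w r)"
  then obtain t where t: "t < length w" "?keep t" "c = fst (w ! t)"
    unfolding covering_eq by auto
  let ?u = "partner w t"
  have u: "?u < length w" "?keep ?u" "fst (w ! ?u) = c" "psign w ?u = psign w t" "?u \<noteq> t"
    using partner_lt[OF wf t(1)] kind_partner_virt[OF wf t(1)] index_partner[OF wf t(1)]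
      partner_fst[OF wf t(1)] psign_partner[OF wf t(1)] partner_ne[OF wf t(1)] t by auto
  have len: "length (filter (\<lambda>x. fst x = c) (covering w r)) = 2"
  proof -
    have "length (filter (\<lambda>x. fst x = c) (covering w r)) =
          length (filter (\<lambda>s. ?keep s \<and> fst (w ! s) = c) [0..<length w])"
      unfolding covering_eq by (simp add: filter_map o_def)
    also have "\<dots> = card {s. s < length w \<and> ?keep s \<and> fst (w ! s) = c}"
      by (rule len_filter_upt)
    also have "{s. s < length w \<and> ?keep s \<and> fst (w ! s) = c} = {t, ?u}"
    proof -
      have "s = t \<or> s = ?u" if "s < length w" "fst (w ! s) = c" for s
        using partner_unique[OF wf t(1) that(1)] that(2) t(3) by auto
      then show ?thesis using t u by auto
    qed
    finally show ?thesis using u(5) by simp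
  qed
  have mem: "?g s \<in> set (covering w r)" if "s < length w" "?keep s" for s
    unfolding covering_eq using that by auto
  have ov: "(c, True, psign w t) \<in> set (covering w r) \<and> (c, False, psign w t) \<in> set (covering w r)"
  proof (cases "kind w t = Over")
    case True
    then have "kind w ?u \<noteq> Over" using kind_partner_over[OF wf t(1)] by auto
    then show ?thesis using mem[OF t(1,2)] mem[OF u(1,2)] True t(3) u(3,4) by auto
  next
    case False
    then have "kind w ?u = Over" using kind_partner_under[OF wf t(1)] t(2) by (cases "kind w t") auto
    then show ?thesis using mem[OF t(1,2)] mem[OF u(1,2)] False t(3) u(3,4) by auto
  qed
  show "\<exists>s. (s = 1 \<or> s = -1) \<and> length (filter (\<lambda>x. fst x = c) (covering w r)) = 2 \<and>
          (c, True, s) \<in> set (covering w r) \<and> (c, False, s) \<in> set (covering w r)"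
    using len ov by (intro exI[of _ "psign w t"]) (auto simp: psign_def)
qed

theorem theorem1p4:
  fixes D :: "vpassage list" and r i :: nat
  assumes "vd_wf D" and "r \<ge> 2" and "1 \<le> i" and "i \<le> r"
  shows "gd_equiv (mplex_knot D r i) (covering D r)"
proof -
  let ?cov = "covering D r"
  let ?G = "Gf D r i"
  let ?mk = "mplex_knot D r i"
  have mk: "?mk = map (\<lambda>(c, ov, s). ((c, ?G c), ov, s)) ?cov" by (rule mplex_knot_map[OF assms(1)])
  have wfc: "gd_wf ?cov" by (rule gd_wf_covering[OF assms(1)])
  have injG: "inj (\<lambda>c. (c, ?G c))" by (rule injI) simp
  have wfm: "gd_wf ?mk" unfolding mk by (rule gd_wf_map[OF injG wfc])
  define X where "X = gd_relabel ?mk"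
  define Y where "Y = gd_relabel ?cov"
  have wfX: "gd_wf X" unfolding X_def gd_relabel_def by (rule gd_wf_map[OF inj_to_nat wfm])
  have wfY: "gd_wf Y" unfolding Y_def gd_relabel_def by (rule gd_wf_map[OF inj_to_nat wfc])
  define f1 :: "nat \<Rightarrow> nat" where
    "f1 n = (if \<exists>c::nat. n = to_nat c then 2 * from_nat n else 2 * n + 1)" for n
  define f2 :: "nat \<Rightarrow> nat" where
    "f2 y = (if \<exists>z::nat \<times> int. y = to_nat z \<and> snd z = ?G (fst z) then 2 * fst (from_nat y :: nat \<times> int) else 2 * y + 1)" for y
  have inj1: "inj f1"
  proof (rule injI)
    fix a b assume "f1 a = f1 b"
    then show "a = b" unfolding f1_def by (auto split: if_splits) presburger+
  qed
  have inj2: "inj f2"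
  proof (rule injI)
    fix a b assume "f2 a = f2 b"
    then show "a = b" unfolding f2_def
      by (auto split: if_splits simp: prod_eq_iff) presburger+
  qed
  have f1c: "f1 (to_nat c) = 2 * c" for c :: nat unfolding f1_def by auto
  have f2c: "f2 (to_nat (c, ?G c)) = 2 * c" for c unfolding f2_def by auto
  have eq: "map (\<lambda>(c, ov, s). (f2 c, ov, s)) X = map (\<lambda>(c, ov, s). (f1 c, ov, s)) Y"
    unfolding X_def Y_def gd_relabel_def mk by (auto simp: f1c f2c)
  let ?R = "\<lambda>x y. gd_step x y \<or> gd_step y x"
  have s1: "gd_step X (map (\<lambda>(c, ov, s). (f2 c, ov, s)) X)" by (rule gd_step.rename[OF wfX inj2])
  have s2: "gd_step Y (map (\<lambda>(c, ov, s). (f1 c, ov, s)) Y)" by (rule gd_step.rename[OF wfY inj1])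
  have "?R\<^sup>*\<^sup>* X Y"
    using s1 s2 eq
    by (metis (no_types, lifting) converse_rtranclp_into_rtranclp r_into_rtranclp)
  then show ?thesis unfolding gd_equiv_def X_def Y_def .
qed

end
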